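(* Let $P$ be a weak plane poset with underlying set $[n]$ such that the total order $\ll$ is the natural order of $[n]$. Then $$WLin(P)=\bigsqcup_{f\in Lin(P)}\{g\in PW(n)\mid g\prec f\},$$ and the union on the right-hand side is disjoint.
   Context: A packed word of length $n$ is a surjection $f:[n]\to[k]$ for some $k$, written $f(1)\cdots f(n)$; $PW(n)$ is the set of these. A weak plane poset is a finite set with two partial orders $\leq_1,\leq_2$ such that $x\leq_1 y$ and $x\leq_2 y$ imply $x=y$, and such that $x\preceq y\iff(x\leq_1 y$ or $x\leq_2 y)$ is a total quasi-order; $x\equiv y$ means $x\preceq y$ and $y\preceq x$; $x\ll y\iff(y\leq_1 x$ or $x\leq_2 y)$ is a total order. $Lin(P)$ is the set of surjections $f:[n]\to[k]$ such that $i\leq_1 j\Rightarrow f(i)\leq f(j)$ and $f(i)=f(j)\Rightarrow i\equiv j$ (linear extensions). $WLin(P)$ is the set of surjections $f:[n]\to[k]$ such that $i\leq_1 j\Rightarrow f(i)\leq f(j)$ and ($i\leq_1 j$ and $f(i)=f(j)$) $\Rightarrow i\equiv j$ (weak linear extensions). For $f,g\in PW(n)$, $g\prec f$ means: (1) for all $i,j$, $f(i)\leq f(j)\Rightarrow g(i)\leq g(j)$; (2) for all $i,j$, ($i<j$ and $f(i)>f(j)$) $\Rightarrow g(i)>g(j)$. (In particular $f\prec f$.) *)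

theory Defs
  imports Main "HOL-Library.Disjoint_Sets"
begin

definition PW :: "nat \<Rightarrow> (nat \<Rightarrow> nat) set" where
  "PW n = {f. (\<forall>i. i \<notin> {1..n} \<longrightarrow> f i = 0) \<and> (\<exists>k. f ` {1..n} = {1..k})}"

definition partial_order_on' :: "'a set \<Rightarrow> ('a \<Rightarrow> 'a \<Rightarrow> bool) \<Rightarrow> bool" where
  "partial_order_on' A r \<longleftrightarrow>
     (\<forall>x y. r x y \<longrightarrow> x \<in> A \<and> y \<in> A) \<and>
     (\<forall>x\<in>A. r x x) \<and>
     (\<forall>x\<in>A. \<forall>y\<in>A. r x y \<and> r y x \<longrightarrow> x = y) \<and>
     (\<forall>x\<in>A. \<forall>y\<in>A. \<forall>z\<in>A. r x y \<and> r y z \<longrightarrow> r x z)"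

definition total_quasi_order_on :: "'a set \<Rightarrow> ('a \<Rightarrow> 'a \<Rightarrow> bool) \<Rightarrow> bool" where
  "total_quasi_order_on A r \<longleftrightarrow>
     (\<forall>x\<in>A. r x x) \<and>
     (\<forall>x\<in>A. \<forall>y\<in>A. \<forall>z\<in>A. r x y \<and> r y z \<longrightarrow> r x z) \<and>
     (\<forall>x\<in>A. \<forall>y\<in>A. r x y \<or> r y x)"

definition total_order_on' :: "'a set \<Rightarrow> ('a \<Rightarrow> 'a \<Rightarrow> bool) \<Rightarrow> bool" where
  "total_order_on' A r \<longleftrightarrow> total_quasi_order_on A r \<and>
     (\<forall>x\<in>A. \<forall>y\<in>A. r x y \<and> r y x \<longrightarrow> x = y)"

definition qle :: "(nat \<Rightarrow> nat \<Rightarrow> bool) \<Rightarrow> (nat \<Rightarrow> nat \<Rightarrow> bool) \<Rightarrow> nat \<Rightarrow> nat \<Rightarrow> bool" where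
  "qle le1 le2 x y \<longleftrightarrow> le1 x y \<or> le2 x y"

definition qeq :: "(nat \<Rightarrow> nat \<Rightarrow> bool) \<Rightarrow> (nat \<Rightarrow> nat \<Rightarrow> bool) \<Rightarrow> nat \<Rightarrow> nat \<Rightarrow> bool" where
  "qeq le1 le2 x y \<longleftrightarrow> qle le1 le2 x y \<and> qle le1 le2 y x"

definition tll :: "(nat \<Rightarrow> nat \<Rightarrow> bool) \<Rightarrow> (nat \<Rightarrow> nat \<Rightarrow> bool) \<Rightarrow> nat \<Rightarrow> nat \<Rightarrow> bool" where
  "tll le1 le2 x y \<longleftrightarrow> le1 y x \<or> le2 x y"

definition weak_plane_poset :: "nat \<Rightarrow> (nat \<Rightarrow> nat \<Rightarrow> bool) \<Rightarrow> (nat \<Rightarrow> nat \<Rightarrow> bool) \<Rightarrow> bool" where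
  "weak_plane_poset n le1 le2 \<longleftrightarrow>
     partial_order_on' {1..n} le1 \<and> partial_order_on' {1..n} le2 \<and>
     (\<forall>x y. le1 x y \<and> le2 x y \<longrightarrow> x = y) \<and>
     total_quasi_order_on {1..n} (qle le1 le2) \<and>
     total_order_on' {1..n} (tll le1 le2)"

definition Lin :: "nat \<Rightarrow> (nat \<Rightarrow> nat \<Rightarrow> bool) \<Rightarrow> (nat \<Rightarrow> nat \<Rightarrow> bool) \<Rightarrow> (nat \<Rightarrow> nat) set" where
  "Lin n le1 le2 = {f \<in> PW n.
     (\<forall>i\<in>{1..n}. \<forall>j\<in>{1..n}. le1 i j \<longrightarrow> f i \<le> f j) \<and>
     (\<forall>i\<in>{1..n}. \<forall>j\<in>{1..n}. f i = f j \<longrightarrow> qeq le1 le2 i j)}"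

definition WLin :: "nat \<Rightarrow> (nat \<Rightarrow> nat \<Rightarrow> bool) \<Rightarrow> (nat \<Rightarrow> nat \<Rightarrow> bool) \<Rightarrow> (nat \<Rightarrow> nat) set" where
  "WLin n le1 le2 = {f \<in> PW n.
     (\<forall>i\<in>{1..n}. \<forall>j\<in>{1..n}. le1 i j \<longrightarrow> f i \<le> f j) \<and>
     (\<forall>i\<in>{1..n}. \<forall>j\<in>{1..n}. le1 i j \<and> f i = f j \<longrightarrow> qeq le1 le2 i j)}"

definition pw_prec :: "nat \<Rightarrow> (nat \<Rightarrow> nat) \<Rightarrow> (nat \<Rightarrow> nat) \<Rightarrow> bool" where
  "pw_prec n g f \<longleftrightarrow>
     (\<forall>i\<in>{1..n}. \<forall>j\<in>{1..n}. f i \<le> f j \<longrightarrow> g i \<le> g j) \<and>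
     (\<forall>i\<in>{1..n}. \<forall>j\<in>{1..n}. i < j \<and> f i > f j \<longrightarrow> g i > g j)"

end

theory Submission
  imports Defs "HOL-Library.Product_Lexorder"
begin

lemma rank_less:
  fixes S :: "'a::linorder set"
  assumes "finite S" "s \<in> S" "s' \<in> S" "s < s'"
  shows "card {t\<in>S. t<s} < card {t\<in>S. t<s'}"
proof (rule psubset_card_mono)
  show "finite {t\<in>S. t<s'}" using assms by auto
  show "{t\<in>S. t<s} \<subset> {t\<in>S. t<s'}" using assms by auto
qed

lemma rank_le_iff:
  fixes S :: "'a::linorder set"
  assumes "finite S" "s \<in> S" "s' \<in> S"
  shows "card {t\<in>S. t<s} \<le> card {t\<in>S. t<s'} \<longleftrightarrow> s \<le> s'"
proof (cases s s' rule: linorder_cases)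
  case less
  then show ?thesis using rank_less[OF assms(1,2,3)] by simp
next
  case equal
  then show ?thesis by simp
next
  case greater
  then show ?thesis using rank_less[OF assms(1,3,2)] by simp
qed

lemma rank_image:
  fixes S :: "'a::linorder set"
  assumes "finite S"
  shows "(\<lambda>s. card {t\<in>S. t<s} + 1) ` S = {1..card S}"
proof -
  have sub: "(\<lambda>s. card {t\<in>S. t<s} + 1) ` S \<subseteq> {1..card S}"
  proof
    fix x assume "x \<in> (\<lambda>s. card {t\<in>S. t<s} + 1) ` S"
    then obtain s where s: "s \<in> S" "x = card {t\<in>S. t<s} + 1" by auto
    have "card {t\<in>S. t<s} < card S"
      by (rule psubset_card_mono) (use assms s in auto)
    then show "x \<in> {1..card S}" using s by auto
  qed
  have inj: "inj_on (\<lambda>s. card {t\<in>S. t<s} + 1) S"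
  proof (rule inj_onI)
    fix x y assume "x \<in> S" "y \<in> S" "card {t\<in>S. t<x} + 1 = card {t\<in>S. t<y} + 1"
    then show "x = y" using rank_le_iff[OF assms, of x y] rank_le_iff[OF assms, of y x] by auto
  qed
  have "card ((\<lambda>s. card {t\<in>S. t<s} + 1) ` S) = card {1..card S}"
    using card_image[OF inj] by simp
  then show ?thesis using card_subset_eq[OF _ sub] by simp
qed

lemma pack_unique:
  fixes f h :: "nat \<Rightarrow> nat"
  assumes "finite A" "f ` A = {1..k1}" "h ` A = {1..k2}"
    and iff: "\<forall>i\<in>A. \<forall>j\<in>A. f i \<le> f j \<longleftrightarrow> h i \<le> h j"
  shows "\<forall>i\<in>A. f i = h i"
proof -
  have "\<forall>i\<in>A. f i = m \<longrightarrow> f i = h i" for m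
  proof (induction m rule: less_induct)
    case (less m)
    show ?case
    proof (intro ballI impI)
      fix i assume i: "i \<in> A" "f i = m"
      define B where "B = {j\<in>A. f j < f i}"
      have B2: "B = {j\<in>A. h j < h i}" using iff i unfolding B_def by (auto simp: not_le[symmetric])
      have fi: "f i \<in> {1..k1}" and hi: "h i \<in> {1..k2}" using i assms by auto
      have fB: "f ` B = {1..<f i}"
      proof
        show "f ` B \<subseteq> {1..<f i}" using assms(2) unfolding B_def by auto
        show "{1..<f i} \<subseteq> f ` B"
        proof
          fix v assume v: "v \<in> {1..<f i}"
          then have "v \<in> f ` A" using assms(2) fi by auto
          then obtain j where "j \<in> A" "v = f j" by auto
          then show "v \<in> f ` B" using v unfolding B_def by auto
        qed
      qed
      have hB: "h ` B = {1..<h i}"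
      proof
        show "h ` B \<subseteq> {1..<h i}" using assms(3) unfolding B2 by auto
        show "{1..<h i} \<subseteq> h ` B"
        proof
          fix v assume v: "v \<in> {1..<h i}"
          then have "v \<in> h ` A" using assms(3) hi by auto
          then obtain j where "j \<in> A" "v = h j" by auto
          then show "v \<in> h ` B" using v unfolding B2 by auto
        qed
      qed
      have "f ` B = h ` B"
        by (rule image_cong[OF refl]) (use less i in \<open>auto simp: B_def\<close>)
      then have eq: "{1..<f i} = {1..<h i}" using fB hB by simp
      show "f i = h i"
      proof (rule ccontr)
        assume "f i \<noteq> h i"
        then consider "f i < h i" | "h i < f i" by linarith
        then show False
        proof cases
          case 1 then have "f i \<in> {1..<h i}" using fi by auto
          then show False using eq by auto
        next
          case 2 then have "h i \<in> {1..<f i}" using hi by auto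
          then show False using eq by auto
        qed
      qed
    qed
  qed
  then show ?thesis by blast
qed


locale wpp =
  fixes n :: nat and le1 le2 :: "nat \<Rightarrow> nat \<Rightarrow> bool"
  assumes wp: "weak_plane_poset n le1 le2"
    and nat_ord: "\<forall>x\<in>{1..n}. \<forall>y\<in>{1..n}. tll le1 le2 x y \<longleftrightarrow> x \<le> y"
begin

lemma le1_dom: "le1 x y \<Longrightarrow> x \<in> {1..n} \<and> y \<in> {1..n}"
  using wp unfolding weak_plane_poset_def partial_order_on'_def by blast
lemma le2_dom: "le2 x y \<Longrightarrow> x \<in> {1..n} \<and> y \<in> {1..n}"
  using wp unfolding weak_plane_poset_def partial_order_on'_def by blast
lemma le1_refl: "x \<in> {1..n} \<Longrightarrow> le1 x x"
  using wp unfolding weak_plane_poset_def partial_order_on'_def by blast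
lemma le1_rev: "le1 x y \<Longrightarrow> y \<le> x"
  using nat_ord le1_dom[of x y] unfolding tll_def by blast
lemma le2_fwd: "le2 x y \<Longrightarrow> x \<le> y"
  using nat_ord le2_dom[of x y] unfolding tll_def by blast
lemma qle_trans: "x \<in> {1..n} \<Longrightarrow> y \<in> {1..n} \<Longrightarrow> z \<in> {1..n} \<Longrightarrow>
   qle le1 le2 x y \<Longrightarrow> qle le1 le2 y z \<Longrightarrow> qle le1 le2 x z"
  using wp unfolding weak_plane_poset_def total_quasi_order_on_def by blast
lemma qle_total: "x \<in> {1..n} \<Longrightarrow> y \<in> {1..n} \<Longrightarrow> qle le1 le2 x y \<or> qle le1 le2 y x"
  using wp unfolding weak_plane_poset_def total_quasi_order_on_def by blast
lemma qeq_refl: "x \<in> {1..n} \<Longrightarrow> qeq le1 le2 x x"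
  using le1_refl unfolding qeq_def qle_def by blast
lemma qeq_sym: "qeq le1 le2 x y \<Longrightarrow> qeq le1 le2 y x"
  unfolding qeq_def by blast
lemma qeq_trans: "x \<in> {1..n} \<Longrightarrow> y \<in> {1..n} \<Longrightarrow> z \<in> {1..n} \<Longrightarrow>
   qeq le1 le2 x y \<Longrightarrow> qeq le1 le2 y z \<Longrightarrow> qeq le1 le2 x z"
  unfolding qeq_def using qle_trans by blast

lemma qeq_lt: "i < j \<Longrightarrow> qeq le1 le2 i j \<Longrightarrow> le1 j i"
  unfolding qeq_def qle_def using le1_rev le2_fwd by force

lemma converse:
  assumes g: "g \<in> PW n" and f: "f \<in> Lin n le1 le2" and p: "pw_prec n g f"
  shows "g \<in> WLin n le1 le2"
proof -
  have "\<forall>i\<in>{1..n}. \<forall>j\<in>{1..n}. le1 i j \<longrightarrow> g i \<le> g j"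
    using f p unfolding Lin_def pw_prec_def by blast
  moreover have "\<forall>i\<in>{1..n}. \<forall>j\<in>{1..n}. le1 i j \<and> g i = g j \<longrightarrow> qeq le1 le2 i j"
  proof (intro ballI impI)
    fix i j assume ij: "i \<in> {1..n}" "j \<in> {1..n}" "le1 i j \<and> g i = g j"
    show "qeq le1 le2 i j"
    proof (cases "i = j")
      case True then show ?thesis using qeq_refl ij by simp
    next
      case False
      then have "j < i" using le1_rev ij by force
      have "f i \<le> f j" using f ij unfolding Lin_def by blast
      moreover have "\<not> f i < f j" using p ij \<open>j < i\<close> unfolding pw_prec_def by force
      ultimately have "f i = f j" by simp
      then show ?thesis using f ij unfolding Lin_def by blast
    qed
  qed
  ultimately show ?thesis using g unfolding WLin_def by blast
qed

end

locale wl = wpp +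
  fixes g :: "nat \<Rightarrow> nat"
  assumes gW: "g \<in> WLin n le1 le2"
begin

definition E where "E i j \<longleftrightarrow> i \<in> {1..n} \<and> j \<in> {1..n} \<and> g i = g j \<and> qeq le1 le2 i j"

lemma g_le1: "le1 i j \<Longrightarrow> g i \<le> g j"
  using gW le1_dom[of i j] unfolding WLin_def by blast
lemma g_le1_eq: "le1 i j \<Longrightarrow> g i = g j \<Longrightarrow> qeq le1 le2 i j"
  using gW le1_dom[of i j] unfolding WLin_def by blast

lemma E_refl: "i \<in> {1..n} \<Longrightarrow> E i i" unfolding E_def using qeq_refl by auto
lemma E_sym: "E i j \<Longrightarrow> E j i" unfolding E_def using qeq_sym by auto
lemma E_trans: "E i j \<Longrightarrow> E j k \<Longrightarrow> E i k" unfolding E_def using qeq_trans by metis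

lemma E4: "x \<in> {1..n} \<Longrightarrow> y \<in> {1..n} \<Longrightarrow> y < x \<Longrightarrow> g x = g y \<Longrightarrow> qle le1 le2 x y \<Longrightarrow> E x y"
  unfolding qle_def E_def using le2_fwd g_le1_eq by force

lemma conv:
  assumes "i < k" "k < j" "E i j" "g k = g i" "k \<in> {1..n}"
  shows "E i k"
proof -
  have i: "i \<in> {1..n}" and j: "j \<in> {1..n}" using assms E_def by auto
  show ?thesis
  proof (cases "qle le1 le2 k i")
    case True
    then show ?thesis using E4[of k i] assms i E_sym by auto
  next
    case False
    then have "qle le1 le2 i k" using qle_total i assms by blast
    moreover have "qle le1 le2 j i" using assms(3) unfolding E_def qeq_def by blast
    ultimately have "qle le1 le2 j k" using qle_trans i j assms by blast
    then have "E j k" using E4[of j k] assms i j unfolding E_def by auto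
    then show ?thesis using E_trans assms by blast
  qed
qed

definition rep where "rep i = Min {j. E i j}"

lemma cls_fin: "finite {j. E i j}"
  by (rule finite_subset[of _ "{1..n}"]) (auto simp: E_def)

lemma rep_E: "i \<in> {1..n} \<Longrightarrow> E i (rep i)"
  unfolding rep_def using Min_in[OF cls_fin, of i] E_refl by auto
lemma rep_le: "i \<in> {1..n} \<Longrightarrow> rep i \<le> i"
  unfolding rep_def using Min_le[OF cls_fin, of i] E_refl by auto
lemma rep_eq: "E i j \<Longrightarrow> rep i = rep j"
proof -
  assume "E i j"
  then have "{k. E i k} = {k. E j k}" using E_trans E_sym by blast
  then show ?thesis unfolding rep_def by simp
qed

lemma rep_mono:
  assumes "i < j" "g i = g j" "i \<in> {1..n}" "j \<in> {1..n}"
  shows "rep i \<le> rep j"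
proof (cases "rep j < i")
  case True
  have "E (rep j) j" using rep_E E_sym assms by blast
  moreover have "g i = g (rep j)" using rep_E[of j] assms E_def by auto
  ultimately have "E (rep j) i" using conv[of "rep j" i j] True assms by auto
  then have "E j i" using rep_E[of j] E_trans assms by blast
  then show ?thesis using rep_eq by simp
next
  case False
  then show ?thesis using rep_le[of i] assms by simp
qed

definition key where "key i = (g i, rep i)"

lemma E_key: "i \<in> {1..n} \<Longrightarrow> j \<in> {1..n} \<Longrightarrow> E i j \<longleftrightarrow> key i = key j"
proof
  assume "i \<in> {1..n}" "j \<in> {1..n}" "E i j"
  then show "key i = key j" unfolding key_def using rep_eq E_def by auto
next
  assume a: "i \<in> {1..n}" "j \<in> {1..n}" "key i = key j"
  then have "E i (rep j)" using rep_E[of i] unfolding key_def by auto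
  then show "E i j" using rep_E[of j] a E_sym E_trans by blast
qed


lemma char1:
  assumes f: "f \<in> Lin n le1 le2" and p: "pw_prec n g f"
    and i: "i \<in> {1..n}" and j: "j \<in> {1..n}"
  shows "f i \<le> f j \<longleftrightarrow> key i \<le> key j"
proof -
  have L1: "\<And>i j. i \<in> {1..n} \<Longrightarrow> j \<in> {1..n} \<Longrightarrow> le1 i j \<Longrightarrow> f i \<le> f j"
    and L2: "\<And>i j. i \<in> {1..n} \<Longrightarrow> j \<in> {1..n} \<Longrightarrow> f i = f j \<Longrightarrow> qeq le1 le2 i j"
    using f unfolding Lin_def by blast+
  have P1: "\<And>i j. i \<in> {1..n} \<Longrightarrow> j \<in> {1..n} \<Longrightarrow> f i \<le> f j \<Longrightarrow> g i \<le> g j"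
    and P2: "\<And>i j. i \<in> {1..n} \<Longrightarrow> j \<in> {1..n} \<Longrightarrow> i < j \<Longrightarrow> f i > f j \<Longrightarrow> g i > g j"
    using p unfolding pw_prec_def by blast+
  have eqf: "f x = f y \<longleftrightarrow> key x = key y" if x: "x \<in> {1..n}" and y: "y \<in> {1..n}" for x y
  proof
    assume fe: "f x = f y"
    have "qeq le1 le2 x y" using L2[OF x y fe] .
    moreover have "g x = g y" using P1[OF x y] P1[OF y x] fe by (simp add: order_antisym)
    ultimately have "E x y" using x y unfolding E_def by simp
    then show "key x = key y" using E_key x y by simp
  next
    assume "key x = key y"
    then have e: "E x y" using E_key x y by auto
    have aux: "f x = f y" if ex: "E x y" and lt: "x < y" for x y
    proof -
      have xy: "x \<in> {1..n}" "y \<in> {1..n}" "qeq le1 le2 x y" using ex unfolding E_def by auto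
      have "le1 y x" using qeq_lt[OF lt xy(3)] .
      then have "f y \<le> f x" using L1[OF xy(2) xy(1)] by simp
      moreover have "\<not> f x > f y"
      proof
        assume "f x > f y"
        then have "g x > g y" using P2[OF xy(1,2) lt] by simp
        then show False using ex unfolding E_def by simp
      qed
      ultimately show ?thesis by simp
    qed
    show "f x = f y"
    proof (cases x y rule: linorder_cases)
      case less then show ?thesis using aux[OF e less] by simp
    next
      case equal then show ?thesis by simp
    next
      case greater then show ?thesis using aux[OF E_sym[OF e] greater] by simp
    qed
  qed
  have ltf: "f x < f y" if x: "x \<in> {1..n}" and y: "y \<in> {1..n}" and k: "key x < key y" for x y
  proof (rule ccontr)
    assume "\<not> f x < f y"
    then have le: "f y \<le> f x" by simp
    then have "g y \<le> g x" using P1[OF y x] by simp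
    moreover have k': "g x < g y \<or> (g x \<le> g y \<and> rep x < rep y)" using k unfolding key_def by simp
    ultimately have gx: "g x = g y" and r: "rep x < rep y" by auto
    have "f y \<noteq> f x"
    proof
      assume "f y = f x"
      then have "key x = key y" using eqf[OF x y] by simp
      then show False using k by simp
    qed
    with le have lt: "f y < f x" by simp
    have rx2: "E x (rep x)" using rep_E[OF x] .
    have ry2: "E y (rep y)" using rep_E[OF y] .
    have rx: "rep x \<in> {1..n}" "E x (rep x)" using rx2 unfolding E_def by blast+
    have ry: "rep y \<in> {1..n}" "E y (rep y)" using ry2 unfolding E_def by blast+
    have "key (rep x) = key x" using E_key[OF rx(1) x] E_sym[OF rx(2)] by simp
    then have e1: "f (rep x) = f x" using eqf[OF rx(1) x] by simp
    have "key (rep y) = key y" using E_key[OF ry(1) y] E_sym[OF ry(2)] by simp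
    then have e2: "f (rep y) = f y" using eqf[OF ry(1) y] by simp
    have "f (rep y) < f (rep x)" using lt e1 e2 by simp
    then have "g (rep x) > g (rep y)" using P2[OF rx(1) ry(1) r] by simp
    moreover have "g (rep x) = g x" "g (rep y) = g y" using rx2 ry2 unfolding E_def by simp_all
    ultimately show False using gx by simp
  qed
  show ?thesis
  proof (cases "key i" "key j" rule: linorder_cases)
    case less then show ?thesis using ltf[OF i j] by simp
  next
    case equal then show ?thesis using eqf[OF i j] by simp
  next
    case greater then show ?thesis using ltf[OF j i] by simp
  qed
qed

lemma char2:
  assumes ord: "\<forall>i\<in>{1..n}. \<forall>j\<in>{1..n}. f i \<le> f j \<longleftrightarrow> key i \<le> key j"
  shows "(\<forall>i\<in>{1..n}. \<forall>j\<in>{1..n}. le1 i j \<longrightarrow> f i \<le> f j) \<and>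
     (\<forall>i\<in>{1..n}. \<forall>j\<in>{1..n}. f i = f j \<longrightarrow> qeq le1 le2 i j) \<and> pw_prec n g f"
proof (intro conjI)
  have O: "f i \<le> f j \<longleftrightarrow> key i \<le> key j" if "i \<in> {1..n}" "j \<in> {1..n}" for i j
    using ord that by blast
  have feq: "f i = f j \<longleftrightarrow> key i = key j" if ij: "i \<in> {1..n}" "j \<in> {1..n}" for i j
    using O[OF ij] O[OF ij(2,1)] by (simp add: eq_iff)
  show "\<forall>i\<in>{1..n}. \<forall>j\<in>{1..n}. le1 i j \<longrightarrow> f i \<le> f j"
  proof (intro ballI impI)
    fix i j assume ij: "i \<in> {1..n}" "j \<in> {1..n}" "le1 i j"
    have gl: "g i \<le> g j" using g_le1 ij by auto
    have "key i \<le> key j"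
    proof (cases "g i = g j")
      case True
      then have "E i j" using g_le1_eq ij unfolding E_def by simp
      then show ?thesis using E_key ij by simp
    next
      case False
      then have "g i < g j" using gl by simp
      then show ?thesis unfolding key_def by simp
    qed
    then show "f i \<le> f j" using O ij by simp
  qed
  show "\<forall>i\<in>{1..n}. \<forall>j\<in>{1..n}. f i = f j \<longrightarrow> qeq le1 le2 i j"
  proof (intro ballI impI)
    fix i j assume ij: "i \<in> {1..n}" "j \<in> {1..n}" "f i = f j"
    then have "E i j" using feq E_key by blast
    then show "qeq le1 le2 i j" unfolding E_def by blast
  qed
  show "pw_prec n g f"
    unfolding pw_prec_def
  proof (intro conjI ballI impI)
    fix i j assume ij: "i \<in> {1..n}" "j \<in> {1..n}" "f i \<le> f j"
    then have "key i \<le> key j" using O by simp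
    then have "g i < g j \<or> (g i \<le> g j \<and> rep i \<le> rep j)" unfolding key_def by simp
    then show "g i \<le> g j" by auto
  next
    fix i j assume ij: "i \<in> {1..n}" "j \<in> {1..n}" "i < j \<and> f j < f i"
    have "\<not> key i \<le> key j" using O[OF ij(1,2)] ij(3) by simp
    then have "key j < key i" by simp
    then have c: "g j < g i \<or> (g j \<le> g i \<and> rep j < rep i)" unfolding key_def by simp
    show "g j < g i"
    proof (rule ccontr)
      assume "\<not> g j < g i"
      then have "g j = g i" "rep j < rep i" using c by auto
      moreover have "rep i \<le> rep j" using rep_mono[of i j] ij \<open>g j = g i\<close> by simp
      ultimately show False by simp
    qed
  qed
qed

definition f0 where "f0 x = (if x \<in> {1..n} then card {t\<in>key ` {1..n}. t < key x} + 1 else 0)"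

lemma f0_ord: "\<forall>i\<in>{1..n}. \<forall>j\<in>{1..n}. f0 i \<le> f0 j \<longleftrightarrow> key i \<le> key j"
  unfolding f0_def using rank_le_iff[of "key ` {1..n}"] by auto

lemma f0_PW: "f0 \<in> PW n"
proof -
  have "f0 ` {1..n} = (\<lambda>s. card {t\<in>key ` {1..n}. t<s} + 1) ` (key ` {1..n})"
    unfolding f0_def image_image by (rule image_cong) auto
  also have "\<dots> = {1..card (key ` {1..n})}" by (rule rank_image) auto
  finally show ?thesis unfolding PW_def by (auto simp: f0_def)
qed

lemma f0_Lin: "f0 \<in> Lin n le1 le2" and f0_prec: "pw_prec n g f0"
  using char2[OF f0_ord] f0_PW unfolding Lin_def by auto

end

theorem mainTheorem6:
  fixes n :: nat and le1 le2 :: "nat \<Rightarrow> nat \<Rightarrow> bool"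
  assumes "weak_plane_poset n le1 le2"
    and "\<forall>x\<in>{1..n}. \<forall>y\<in>{1..n}. tll le1 le2 x y \<longleftrightarrow> x \<le> y"
  shows "WLin n le1 le2 = (\<Union>f\<in>Lin n le1 le2. {g \<in> PW n. pw_prec n g f})
    \<and> disjoint_family_on (\<lambda>f. {g \<in> PW n. pw_prec n g f}) (Lin n le1 le2)"
proof -
  interpret wpp n le1 le2 using assms by unfold_locales
  have A: "WLin n le1 le2 = (\<Union>f\<in>Lin n le1 le2. {g \<in> PW n. pw_prec n g f})"
  proof
    show "WLin n le1 le2 \<subseteq> (\<Union>f\<in>Lin n le1 le2. {g \<in> PW n. pw_prec n g f})"
    proof
      fix g assume g: "g \<in> WLin n le1 le2"
      interpret wl n le1 le2 g using assms g by unfold_locales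
      show "g \<in> (\<Union>f\<in>Lin n le1 le2. {g \<in> PW n. pw_prec n g f})"
        using f0_Lin f0_prec g unfolding WLin_def by blast
    qed
    show "(\<Union>f\<in>Lin n le1 le2. {g \<in> PW n. pw_prec n g f}) \<subseteq> WLin n le1 le2"
      using converse by blast
  qed
  have B: "disjoint_family_on (\<lambda>f. {g \<in> PW n. pw_prec n g f}) (Lin n le1 le2)"
    unfolding disjoint_family_on_def
  proof (intro ballI impI)
    fix f1 f2 assume f1: "f1 \<in> Lin n le1 le2" and f2: "f2 \<in> Lin n le1 le2" and ne: "f1 \<noteq> f2"
    show "{g \<in> PW n. pw_prec n g f1} \<inter> {g \<in> PW n. pw_prec n g f2} = {}"
    proof (rule ccontr)
      assume "{g \<in> PW n. pw_prec n g f1} \<inter> {g \<in> PW n. pw_prec n g f2} \<noteq> {}"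
      then obtain g where g: "g \<in> PW n" "pw_prec n g f1" "pw_prec n g f2" by blast
      have gW: "g \<in> WLin n le1 le2" using converse g f1 by blast
      interpret wl n le1 le2 g using assms gW by unfold_locales
      obtain k1 where k1: "f1 ` {1..n} = {1..k1}" using f1 unfolding Lin_def PW_def by blast
      obtain k2 where k2: "f2 ` {1..n} = {1..k2}" using f2 unfolding Lin_def PW_def by blast
      have "\<forall>i\<in>{1..n}. \<forall>j\<in>{1..n}. f1 i \<le> f1 j \<longleftrightarrow> f2 i \<le> f2 j"
        using char1[OF f1 g(2)] char1[OF f2 g(3)] by blast
      then have "\<forall>i\<in>{1..n}. f1 i = f2 i" by (rule pack_unique[OF finite_atLeastAtMost k1 k2])
      moreover have "\<forall>i. i \<notin> {1..n} \<longrightarrow> f1 i = 0"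
        using f1 unfolding Lin_def PW_def by blast
      moreover have "\<forall>i. i \<notin> {1..n} \<longrightarrow> f2 i = 0"
        using f2 unfolding Lin_def PW_def by blast
      ultimately have "f1 = f2" by (intro ext) metis
      then show False using ne by simp
    qed
  qed
  show ?thesis using A B by blast
qed

end
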